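(* Let $\alpha\in(d-1,d]$. There exist constants $C_1=C_1(d)>0$ and $C_2=C_2(d,\alpha)>0$ such that for every bounded set $A\subset\mathbb{R}^d$ with $\mathcal{H}^{\alpha}(A)<a$ (where $a>0$) and every $\varepsilon>0$ there exists a supercovering $\mathfrak{B}$ of $A$ such that: 1) the center of every ball of $\mathfrak{B}$ lies in $A$ and its radius does not exceed $\varepsilon$; 2) $\mathfrak{B}$ can be split into $C_1$ subfamilies $\mathfrak{B}^1,\ldots,\mathfrak{B}^{C_1}$, each of which is a disjoint family of balls, satisfying $$\sum_{B_{r_i}(x_i)\in\mathfrak{B}^j} r_i^{\alpha}\leq C_2 a,\qquad j=1,2,\ldots,C_1.$$
   Context: A family $\mathfrak{B}$ of open Euclidean balls is called a supercovering of a set $A\subset\mathbb{R}^d$ if $A\subset\bigcup_{B_{r_j}(x_j)\in\mathfrak{B}} B_{r_j/3}(x_j)$, where $B_r(x)$ is the open ball of radius $r$ centered at $x$. A disjoint family of balls is one in which no two balls intersect. $\mathcal{H}^\alpha$ is the $\alpha$-dimensional Hausdorff measure. *)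

theory Defs
  imports "HOL-Analysis.Analysis"
begin

definition hausdorff_const :: "real \<Rightarrow> real" where
  "hausdorff_const \<alpha> = pi powr (\<alpha> / 2) / Gamma (\<alpha> / 2 + 1)"

definition hausdorff_pre :: "real \<Rightarrow> real \<Rightarrow> 'a::euclidean_space set \<Rightarrow> ennreal" where
  "hausdorff_pre \<alpha> \<delta> A =
     (INF C \<in> {C :: nat \<Rightarrow> 'a set. A \<subseteq> (\<Union>i. C i) \<and>
                 (\<forall>i. bounded (C i) \<and> diameter (C i) \<le> \<delta>)}.
        (\<Sum>i. ennreal (hausdorff_const \<alpha> * (diameter (C i) / 2) powr \<alpha>)))"

definition hausdorff_measure :: "real \<Rightarrow> 'a::euclidean_space set \<Rightarrow> ennreal" where
  "hausdorff_measure \<alpha> A = (SUP \<delta> \<in> {0<..}. hausdorff_pre \<alpha> \<delta> A)"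

text \<open>A family of balls is represented as a set of (centre, radius) pairs.\<close>

definition supercovering :: "('a::metric_space \<times> real) set \<Rightarrow> 'a set \<Rightarrow> bool" where
  "supercovering \<B> A \<longleftrightarrow> A \<subseteq> (\<Union>(x, r) \<in> \<B>. ball x (r / 3))"

definition disjoint_balls :: "('a::metric_space \<times> real) set \<Rightarrow> bool" where
  "disjoint_balls \<B> \<longleftrightarrow>
     (\<forall>p\<in>\<B>. \<forall>q\<in>\<B>. p \<noteq> q \<longrightarrow> ball (fst p) (snd p) \<inter> ball (fst q) (snd q) = {})"

end

theory Submission
  imports Defs
begin


definition cube :: "'a::euclidean_space \<Rightarrow> real \<Rightarrow> 'a set" where
  "cube c r = {y. \<forall>b\<in>Basis. \<bar>(y - c) \<bullet> b\<bar> < r}"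

lemma hausdorff_const_pos: "\<alpha> > 0 \<Longrightarrow> hausdorff_const \<alpha> > 0"
  unfolding hausdorff_const_def by (auto intro!: divide_pos_pos Gamma_real_pos)

lemma sum_half_pow: "(\<Sum>i<N. (1/2::real)^(Suc i)) = 1 - (1/2)^N"
  by (induction N) auto

lemma sum_half_pow_fin: "finite I \<Longrightarrow> (\<Sum>i\<in>I. (1/2::real)^(Suc i)) \<le> 1"
proof -
  assume "finite I"
  then obtain N where "I \<subseteq> {..<N}"
    by (meson finite_nat_iff_bounded)
  then have "(\<Sum>i\<in>I. (1/2::real)^(Suc i)) \<le> (\<Sum>i<N. (1/2::real)^(Suc i))"
    by (intro sum_mono2) auto
  also have "\<dots> \<le> 1" unfolding sum_half_pow by simp
  finally show ?thesis .
qed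

lemma powr_add_le:
  fixes x y \<alpha> :: real
  assumes "0 \<le> x" "0 \<le> y" "0 \<le> \<alpha>"
  shows "(x + y) powr \<alpha> \<le> 2 powr \<alpha> * (x powr \<alpha> + y powr \<alpha>)"
proof -
  have "(x + y) powr \<alpha> \<le> (2 * max x y) powr \<alpha>"
    using assms by (intro powr_mono2) auto
  also have "\<dots> = 2 powr \<alpha> * (max x y) powr \<alpha>"
    using assms by (simp add: powr_mult)
  also have "(max x y) powr \<alpha> \<le> x powr \<alpha> + y powr \<alpha>"
    by (cases "x \<le> y") (auto simp: max_def)
  then have "2 powr \<alpha> * (max x y) powr \<alpha> \<le> 2 powr \<alpha> * (x powr \<alpha> + y powr \<alpha>)"
    by (intro mult_left_mono) auto
  finally show ?thesis .
qed

lemma cover_cubes: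
  fixes A :: "'a::euclidean_space set"
  assumes alpha: "\<alpha> > 0" and a: "a > 0" and tau: "\<tau> > 0"
    and H: "hausdorff_measure \<alpha> A < ennreal a"
  shows "\<exists>(c::nat \<Rightarrow> 'a) R. (\<forall>i. 0 \<le> R i \<and> R i \<le> \<tau>) \<and> A \<subseteq> (\<Union>i. cube (c i) (R i)) \<and>
     (\<forall>I. finite I \<longrightarrow> (\<Sum>i\<in>I. R i powr \<alpha>) \<le> 2 powr \<alpha> * (2 powr \<alpha> / hausdorff_const \<alpha> + 1) * a)"
proof -
  define hc where "hc = hausdorff_const \<alpha>"
  have hc: "hc > 0" unfolding hc_def using alpha by (rule hausdorff_const_pos)
  have "hausdorff_pre \<alpha> (\<tau>/2) A \<le> hausdorff_measure \<alpha> A"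
    unfolding hausdorff_measure_def using tau by (intro SUP_upper) auto
  with H have "hausdorff_pre \<alpha> (\<tau>/2) A < ennreal a" by simp
  then obtain C :: "nat \<Rightarrow> 'a set" where Ccov: "A \<subseteq> (\<Union>i. C i)"
    and Cb: "\<And>i. bounded (C i)" and Cd: "\<And>i. diameter (C i) \<le> \<tau>/2"
    and Csum: "(\<Sum>i. ennreal (hc * (diameter (C i) / 2) powr \<alpha>)) < ennreal a"
    unfolding hausdorff_pre_def hc_def by (auto simp: INF_less_iff)
  define D where "D i = diameter (C i)" for i
  have D0: "0 \<le> D i" for i unfolding D_def using Cb[of i] by (simp add: diameter_ge_0)
  define \<eta> where "\<eta> i = min (\<tau>/2) ((a * (1/2)^(Suc i)) powr (1/\<alpha>))" for i
  define c where "c i = (SOME y. y \<in> C i)" for i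
  define R where "R i = (if C i = {} then 0 else D i + \<eta> i)" for i
  have eta0: "0 < \<eta> i" for i unfolding \<eta>_def using tau a by auto
  have eta_pow: "\<eta> i powr \<alpha> \<le> a * (1/2)^(Suc i)" for i
  proof -
    have "\<eta> i powr \<alpha> \<le> ((a * (1/2)^(Suc i)) powr (1/\<alpha>)) powr \<alpha>"
      using eta0[of i] alpha unfolding \<eta>_def by (intro powr_mono2) auto
    also have "\<dots> = a * (1/2)^(Suc i)"
      using alpha a by (simp add: powr_powr)
    finally show ?thesis .
  qed
  have R0: "0 \<le> R i" for i using D0[of i] eta0[of i] unfolding R_def by auto
  have Rle: "R i \<le> \<tau>" for i
    using Cd[of i] unfolding R_def D_def \<eta>_def by auto
  have cov: "A \<subseteq> (\<Union>i. cube (c i) (R i))"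
  proof
    fix y assume "y \<in> A"
    then obtain i where yi: "y \<in> C i" using Ccov by auto
    then have ne: "C i \<noteq> {}" by auto
    then have ci: "c i \<in> C i" unfolding c_def by (simp add: some_in_eq)
    have "y \<in> cube (c i) (R i)"
      unfolding cube_def mem_Collect_eq
    proof (intro ballI)
      fix b :: 'a assume b: "b \<in> Basis"
      have "\<bar>(y - c i) \<bullet> b\<bar> \<le> norm (y - c i)" using b by (rule Basis_le_norm)
      also have "\<dots> \<le> D i" unfolding D_def
        using diameter_bounded_bound[OF Cb yi ci] by (simp add: dist_norm)
      also have "\<dots> < R i" unfolding R_def using ne eta0[of i] by simp
      finally show "\<bar>(y - c i) \<bullet> b\<bar> < R i" .
    qed
    then show "y \<in> (\<Union>i. cube (c i) (R i))" by auto
  qed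
  have sumD: "(\<Sum>i\<in>I. hc * (D i / 2) powr \<alpha>) \<le> a" if I: "finite I" for I
  proof -
    have "ennreal (\<Sum>i\<in>I. hc * (D i / 2) powr \<alpha>) = (\<Sum>i\<in>I. ennreal (hc * (D i / 2) powr \<alpha>))"
      using hc by (intro sum_ennreal[symmetric]) auto
    also obtain N where "I \<subseteq> {..<N}" using I by (meson finite_nat_iff_bounded)
    then have "(\<Sum>i\<in>I. ennreal (hc * (D i / 2) powr \<alpha>)) \<le> (\<Sum>i<N. ennreal (hc * (D i / 2) powr \<alpha>))"
      by (intro sum_mono2) auto
    also have "\<dots> \<le> (\<Sum>i. ennreal (hc * (D i / 2) powr \<alpha>))"
      by (intro sum_le_suminf) auto
    also have "\<dots> < ennreal a" using Csum unfolding D_def .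
    finally have "ennreal (\<Sum>i\<in>I. hc * (D i / 2) powr \<alpha>) < ennreal a" .
    then show ?thesis using a by (metis ennreal_le_iff less_le order.strict_implies_order ennreal_less_iff less_eq_real_def not_le)
  qed
  have Rpow: "R i powr \<alpha> \<le> 2 powr \<alpha> * ((2 powr \<alpha> / hc) * (hc * (D i / 2) powr \<alpha>) + a * (1/2)^(Suc i))" for i
  proof (cases "C i = {}")
    case True
    then show ?thesis unfolding R_def using a hc by auto
  next
    case False
    have "R i powr \<alpha> \<le> 2 powr \<alpha> * (D i powr \<alpha> + \<eta> i powr \<alpha>)"
      unfolding R_def using False D0[of i] eta0[of i] alpha by (simp add: powr_add_le)
    also have "D i powr \<alpha> = (2 powr \<alpha> / hc) * (hc * (D i / 2) powr \<alpha>)"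
      using hc D0[of i] by (simp add: powr_divide)
    finally show ?thesis using eta_pow[of i]
      by (smt (verit, ccfv_SIG) mult_left_mono powr_ge_zero)
  qed
  have "(\<Sum>i\<in>I. R i powr \<alpha>) \<le> 2 powr \<alpha> * (2 powr \<alpha> / hc + 1) * a" if I: "finite I" for I
  proof -
    have "(\<Sum>i\<in>I. R i powr \<alpha>) \<le> (\<Sum>i\<in>I. 2 powr \<alpha> * ((2 powr \<alpha> / hc) * (hc * (D i / 2) powr \<alpha>) + a * (1/2)^(Suc i)))"
      by (intro sum_mono Rpow)
    also have "\<dots> = 2 powr \<alpha> * ((2 powr \<alpha> / hc) * (\<Sum>i\<in>I. hc * (D i / 2) powr \<alpha>) + a * (\<Sum>i\<in>I. (1/2)^(Suc i)))"
      by (simp only: sum.distrib flip: sum_distrib_left)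
    also have "\<dots> \<le> 2 powr \<alpha> * ((2 powr \<alpha> / hc) * a + a * 1)"
      using sumD[OF I] sum_half_pow_fin[OF I] hc a
      by (intro mult_left_mono add_mono mult_left_mono) auto
    also have "\<dots> = 2 powr \<alpha> * (2 powr \<alpha> / hc + 1) * a" by (simp add: algebra_simps)
    finally show ?thesis .
  qed
  then show ?thesis using R0 Rle cov unfolding hc_def by blast
qed



locale grid =
  fixes A :: "'a::euclidean_space set" and c :: "nat \<Rightarrow> 'a" and R :: "nat \<Rightarrow> real"
    and \<alpha> \<epsilon> S :: real
  assumes alpha: "real DIM('a) - 1 < \<alpha>"
    and eps: "0 < \<epsilon>"
    and R0: "\<And>i. 0 \<le> R i"
    and Rle: "\<And>i. R i \<le> \<epsilon> / (3 * real DIM('a))"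
    and cover: "A \<subseteq> (\<Union>i. cube (c i) (R i))"
    and sumR: "\<And>I. finite I \<Longrightarrow> (\<Sum>i\<in>I. R i powr \<alpha>) \<le> S"
begin

definition dd :: real where "dd = real DIM('a)"
definition Mi :: int where "Mi = 12 * int DIM('a)"
definition MM :: real where "MM = of_int Mi"
definition T0 :: real where "T0 = \<epsilon> / (3 * dd)"
definition t :: "nat \<Rightarrow> real" where "t k = T0 / 2 ^ k"
definition depth :: "nat \<Rightarrow> 'a \<Rightarrow> real" where
  "depth i y = Min ((\<lambda>b. R i - \<bar>(y - c i) \<bullet> b\<bar>) ` Basis)"
definition tm :: "nat \<Rightarrow> 'a \<Rightarrow> real" where
  "tm i y = max 0 (min (R i) (depth i y / MM))"
definition sc :: "'a \<Rightarrow> real" where "sc y = (SUP i. tm i y)"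
definition lev :: "'a \<Rightarrow> nat" where "lev y = (LEAST k. t k \<le> sc y)"

lemma dd_ge1: "dd \<ge> 1" unfolding dd_def using DIM_positive[where 'a='a] by linarith
lemma MM_eq: "MM = 12 * dd" unfolding MM_def Mi_def dd_def by simp
lemma MM_pos: "MM > 0" using MM_eq dd_ge1 by simp
lemma T0_pos: "T0 > 0" unfolding T0_def using eps dd_ge1 by simp
lemma t_pos: "t k > 0" unfolding t_def using T0_pos by simp
lemma t_Suc: "t (Suc k) = t k / 2" unfolding t_def by simp
lemma t_le_T0: "t k \<le> T0" unfolding t_def using T0_pos by (simp add: divide_le_eq one_le_power mult_le_cancel_left1)
lemma t_anti: "j \<le> k \<Longrightarrow> t k \<le> t j"
  unfolding t_def using T0_pos by (intro divide_left_mono) (auto intro: power_increasing)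
lemma t_inj: "t j = t k \<Longrightarrow> j = k"
  unfolding t_def using T0_pos by (auto simp: power_inject_exp)
lemma R_le_T0: "R i \<le> T0" using Rle unfolding T0_def dd_def .

lemma alpha_pos: "\<alpha> > 0" using alpha dd_ge1 unfolding dd_def by linarith

lemma tm_nonneg: "0 \<le> tm i y" unfolding tm_def by simp
lemma tm_le: "tm i y \<le> T0" unfolding tm_def using R_le_T0[of i] T0_pos by auto
lemma tm_bdd: "bdd_above (range (\<lambda>i. tm i y))"
  using tm_le by (intro bdd_aboveI2) auto
lemma tm_le_sc: "tm i y \<le> sc y" unfolding sc_def by (rule cSUP_upper[OF UNIV_I tm_bdd])
lemma sc_nonneg: "0 \<le> sc y" using tm_le_sc[of 0 y] tm_nonneg[of 0 y] by linarith
lemma sc_le: "sc y \<le> T0" unfolding sc_def using tm_le by (intro cSUP_least) auto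

lemma depth_lip: "depth i x \<ge> depth i y - norm (x - y)"
proof -
  have fin: "finite ((\<lambda>b. R i - \<bar>(x - c i) \<bullet> b\<bar>) ` Basis)" "(\<lambda>b. R i - \<bar>(x - c i) \<bullet> b\<bar>) ` Basis \<noteq> {}"
    by auto
  obtain b where b: "b \<in> Basis" and db: "depth i x = R i - \<bar>(x - c i) \<bullet> b\<bar>"
    using Min_in[OF fin] unfolding depth_def by (metis (no_types, lifting) imageE)
  have "depth i y \<le> R i - \<bar>(y - c i) \<bullet> b\<bar>"
    unfolding depth_def using b by (intro Min_le) auto
  moreover have "\<bar>(x - c i) \<bullet> b\<bar> \<le> \<bar>(y - c i) \<bullet> b\<bar> + norm (x - y)"
  proof -
    have "(x - c i) \<bullet> b = (y - c i) \<bullet> b + (x - y) \<bullet> b" by (simp add: inner_diff_left)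
    moreover have "\<bar>(x - y) \<bullet> b\<bar> \<le> norm (x - y)" using b by (rule Basis_le_norm)
    ultimately show ?thesis by linarith
  qed
  ultimately show ?thesis using db by linarith
qed

lemma tm_lip: "tm i x \<ge> tm i y - norm (x - y) / MM"
proof -
  have "depth i x / MM \<ge> depth i y / MM - norm (x - y) / MM"
    using depth_lip[of i y x] MM_pos by (simp add: divide_right_mono diff_divide_distrib[symmetric])
  moreover have "norm (x - y) / MM \<ge> 0" using MM_pos by simp
  ultimately show ?thesis unfolding tm_def by (simp add: max_def min_def)
qed

lemma sc_lip: "sc x \<ge> sc y - norm (x - y) / MM"
proof -
  have "sc y \<le> sc x + norm (x - y) / MM"
    unfolding sc_def[of y]
  proof (intro cSUP_least)
    fix i
    show "tm i y \<le> sc x + norm (x - y) / MM" using tm_lip[of i y x] tm_le_sc[of i x] by linarith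
  qed auto
  then show ?thesis by linarith
qed

lemma sc_pos: assumes "y \<in> A" shows "sc y > 0"
proof -
  obtain i where yi: "y \<in> cube (c i) (R i)" using cover assms by auto
  have "depth i y > 0" unfolding depth_def using yi unfolding cube_def
    by (subst Min_gr_iff) auto
  moreover obtain b :: 'a where "b \<in> Basis" using nonempty_Basis by blast
  then have "R i > 0" using yi unfolding cube_def by (smt (verit) mem_Collect_eq)
  ultimately have "tm i y > 0" unfolding tm_def using MM_pos by simp
  then show ?thesis using tm_le_sc[of i y] by linarith
qed

lemma sc_pick: assumes "sc y > 0" shows "\<exists>i. tm i y > sc y / 2"
proof (rule ccontr)
  assume "\<not> ?thesis"
  then have "\<And>i. tm i y \<le> sc y / 2" by (simp add: not_less)
  then have "sc y \<le> sc y / 2" unfolding sc_def[of y] by (intro cSUP_least) auto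
  with assms show False by simp
qed

lemma lev_ex: assumes "sc y > 0" shows "\<exists>k. t k \<le> sc y"
proof -
  obtain n where "T0 / sc y < 2 ^ n" using real_arch_pow[of 2 "T0 / sc y"] by auto
  then have "t n < sc y" unfolding t_def using assms by (simp add: divide_less_eq mult.commute)
  then show ?thesis by (auto intro: less_imp_le)
qed

lemma lev_props: assumes "sc y > 0" shows "t (lev y) \<le> sc y" "sc y < 2 * t (lev y)"
proof -
  show "t (lev y) \<le> sc y" unfolding lev_def using lev_ex[OF assms] by (rule LeastI_ex)
  show "sc y < 2 * t (lev y)"
  proof (cases "lev y")
    case 0
    then show ?thesis using sc_le[of y] T0_pos unfolding t_def by simp
  next
    case (Suc k)
    then have "\<not> t k \<le> sc y" unfolding lev_def by (metis lessI not_less_Least)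
    then show ?thesis using Suc t_Suc[of k] by simp
  qed
qed

lemma grading:
  assumes "sc y > 0" "norm (x - y) \<le> 6 * dd * t (lev y)"
  shows "lev x \<le> Suc (lev y)"
proof -
  have "sc x \<ge> sc y - norm (x - y) / MM" by (rule sc_lip)
  moreover have "norm (x - y) / MM \<le> t (lev y) / 2"
    using assms(2) MM_eq dd_ge1 by (simp add: divide_le_eq mult.commute mult.left_commute)
  ultimately have "t (Suc (lev y)) \<le> sc x" using lev_props(1)[OF assms(1)] t_Suc[of "lev y"] by linarith
  then show ?thesis unfolding lev_def by (rule Least_le)
qed

end


lemma floor_eq_close: "\<lfloor>u::real\<rfloor> = \<lfloor>v\<rfloor> \<Longrightarrow> \<bar>u - v\<bar> < 1"
proof -
  assume e: "\<lfloor>u::real\<rfloor> = \<lfloor>v\<rfloor>"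
  have "of_int \<lfloor>u\<rfloor> \<le> u" "u < of_int \<lfloor>u\<rfloor> + 1" "of_int \<lfloor>v\<rfloor> \<le> v" "v < of_int \<lfloor>v\<rfloor> + 1"
    by (simp_all add: floor_correct)
  then show ?thesis using e by linarith
qed

lemma floor_far: "m \<le> \<bar>\<lfloor>u::real\<rfloor> - \<lfloor>v\<rfloor>\<bar> \<Longrightarrow> real_of_int m - 1 < \<bar>u - v\<bar>"
proof -
  assume h: "m \<le> \<bar>\<lfloor>u\<rfloor> - \<lfloor>v\<rfloor>\<bar>"
  have "u - 1 < of_int \<lfloor>u\<rfloor>" "of_int \<lfloor>u\<rfloor> \<le> u" "v - 1 < of_int \<lfloor>v\<rfloor>" "of_int \<lfloor>v\<rfloor> \<le> v"
    by linarith+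
  moreover have "real_of_int m \<le> \<bar>of_int \<lfloor>u\<rfloor> - of_int \<lfloor>v\<rfloor>\<bar>"
  proof -
    have "real_of_int m \<le> real_of_int \<bar>\<lfloor>u\<rfloor> - \<lfloor>v\<rfloor>\<bar>" using h by (simp only: of_int_le_iff)
    then show ?thesis by simp
  qed
  ultimately show ?thesis by linarith
qed

context grid
begin

definition idx :: "nat \<Rightarrow> 'a \<Rightarrow> 'a \<Rightarrow> int" where
  "idx k y = restrict (\<lambda>b. \<lfloor>(y \<bullet> b) / t k\<rfloor>) Basis"
definition cells :: "(nat \<times> ('a \<Rightarrow> int)) set" where
  "cells = (\<lambda>y. (lev y, idx (lev y) y)) ` A"
definition ctr :: "nat \<times> ('a \<Rightarrow> int) \<Rightarrow> 'a" where
  "ctr F = (SOME y. y \<in> A \<and> (lev y, idx (lev y) y) = F)"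
definition rad :: "nat \<Rightarrow> real" where "rad k = 3 * dd * t k"

lemma ctr_props: assumes "F \<in> cells"
  shows "ctr F \<in> A" "lev (ctr F) = fst F" "idx (fst F) (ctr F) = snd F"
proof -
  have "\<exists>y. y \<in> A \<and> (lev y, idx (lev y) y) = F" using assms unfolding cells_def by auto
  then have "ctr F \<in> A \<and> (lev (ctr F), idx (lev (ctr F)) (ctr F)) = F"
    unfolding ctr_def by (rule someI_ex)
  then show "ctr F \<in> A" "lev (ctr F) = fst F" "idx (fst F) (ctr F) = snd F" by (metis fst_conv snd_conv)+
qed

lemma rad_pos: "rad k > 0" unfolding rad_def using dd_ge1 t_pos by simp
lemma rad_le: "rad k \<le> \<epsilon>"
proof -
  have "rad k \<le> 3 * dd * T0" unfolding rad_def using dd_ge1 t_le_T0 by simp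
  also have "\<dots> = \<epsilon>" unfolding T0_def using dd_ge1 by simp
  finally show ?thesis .
qed

lemma same_idx_close: assumes "idx k x = idx k y" shows "norm (x - y) < dd * t k"
proof -
  have "\<bar>(x - y) \<bullet> b\<bar> < t k" if b: "b \<in> Basis" for b
  proof -
    have "\<lfloor>(x \<bullet> b) / t k\<rfloor> = \<lfloor>(y \<bullet> b) / t k\<rfloor>"
      using fun_cong[OF assms, of b] b unfolding idx_def by simp
    then have h: "\<bar>(x \<bullet> b) / t k - (y \<bullet> b) / t k\<bar> < 1" by (rule floor_eq_close)
    have "(x \<bullet> b) / t k - (y \<bullet> b) / t k = ((x - y) \<bullet> b) / t k"
      by (simp only: inner_diff_left diff_divide_distrib)
    with h have "\<bar>(x - y) \<bullet> b\<bar> / t k < 1" using t_pos[of k] by (simp only: abs_divide abs_of_pos)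
    then show ?thesis using t_pos[of k] by (simp only: divide_less_eq_1_pos)
  qed
  then have "(\<Sum>b\<in>Basis. \<bar>(x - y) \<bullet> b\<bar>) < (\<Sum>b\<in>(Basis::'a set). t k)"
    by (intro sum_strict_mono) auto
  moreover have "(\<Sum>b\<in>(Basis::'a set). t k) = dd * t k" unfolding dd_def by simp
  ultimately show ?thesis using norm_le_l1[of "x - y"] by linarith
qed

lemma far_idx:
  assumes b: "b \<in> Basis" and m: "m \<le> \<bar>idx k x b - idx k y b\<bar>"
  shows "(real_of_int m - 1) * t k < norm (x - y)"
proof -
  have "m \<le> \<bar>\<lfloor>(x \<bullet> b) / t k\<rfloor> - \<lfloor>(y \<bullet> b) / t k\<rfloor>\<bar>" using m b unfolding idx_def by simp
  then have "real_of_int m - 1 < \<bar>(x \<bullet> b) / t k - (y \<bullet> b) / t k\<bar>" by (rule floor_far)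
  also have "\<dots> = \<bar>(x - y) \<bullet> b\<bar> / t k" using t_pos[of k]
    by (metis abs_divide abs_of_pos diff_divide_distrib inner_diff_left)
  finally have "(real_of_int m - 1) * t k < \<bar>(x - y) \<bullet> b\<bar>" using t_pos[of k] by (simp add: less_divide_eq)
  also have "\<dots> \<le> norm (x - y)" using b by (rule Basis_le_norm)
  finally show ?thesis .
qed

definition mm :: int where "mm = 6 * int DIM('a) + 1"
definition col :: "nat \<times> ('a \<Rightarrow> int) \<Rightarrow> nat \<times> ('a \<Rightarrow> int)" where
  "col F = (fst F mod 3, restrict (\<lambda>b. snd F b mod mm) Basis)"
definition ColSet :: "(nat \<times> ('a \<Rightarrow> int)) set" where
  "ColSet = {..<3} \<times> PiE Basis (\<lambda>_. {0..<mm})"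

lemma mm_pos: "mm > 0" unfolding mm_def by simp

lemma col_in: "col F \<in> ColSet"
  unfolding col_def ColSet_def using mm_pos by (auto simp: PiE_iff)

lemma ColSet_fin: "finite ColSet" unfolding ColSet_def by (auto intro!: finite_PiE)

lemma ColSet_card: "card ColSet = 3 * (6 * DIM('a) + 1) ^ DIM('a)"
proof -
  have "card (PiE Basis (\<lambda>_::'a. {0..<mm})) = (\<Prod>b\<in>(Basis::'a set). card {0..<mm})"
    by (simp add: card_PiE)
  also have "\<dots> = (6 * DIM('a) + 1) ^ DIM('a)" unfolding mm_def by (simp add: nat_add_distrib nat_mult_distrib)
  finally show ?thesis unfolding ColSet_def by (simp add: card_cartesian_product)
qed

lemma balls_disjoint_aux:
  assumes F: "F \<in> cells" and G: "G \<in> cells" and cl: "col F = col G" and ne: "F \<noteq> G"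
    and le: "fst G \<le> fst F"
  shows "ball (ctr F) (rad (fst F)) \<inter> ball (ctr G) (rad (fst G)) = {}"
proof (rule ccontr)
  assume "\<not> ?thesis"
  then obtain z where z1: "dist (ctr F) z < rad (fst F)" and z2: "dist (ctr G) z < rad (fst G)" by auto
  define x where "x = ctr F"
  define y where "y = ctr G"
  define k where "k = fst F"
  define j where "j = fst G"
  have xA: "x \<in> A" and lx: "lev x = k" and ix: "idx k x = snd F" using ctr_props[OF F] unfolding x_def k_def by auto
  have yA: "y \<in> A" and ly: "lev y = j" and iy: "idx j y = snd G" using ctr_props[OF G] unfolding y_def j_def by auto
  have "norm (x - y) \<le> dist x z + dist z y" by (metis dist_norm dist_triangle)
  also have "\<dots> < rad k + rad j" using z1 z2 unfolding x_def y_def k_def j_def by (simp add: dist_commute)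
  also have "\<dots> \<le> 6 * dd * t j" unfolding rad_def using t_anti[of j k] le dd_ge1 unfolding j_def k_def by simp
  finally have nxy: "norm (x - y) < 6 * dd * t j" .
  have "lev x \<le> Suc (lev y)" using grading[OF sc_pos[OF yA]] nxy ly by simp
  then have kj: "k \<le> Suc j" using lx ly by simp
  have "k mod 3 = j mod 3" using cl unfolding col_def k_def j_def by simp
  have kj': "k = j"
  proof -
    have "j \<le> k" using le unfolding k_def j_def .
    with kj have "k = j \<or> k = Suc j" by linarith
    moreover have "Suc j mod 3 \<noteq> j mod 3" by (auto simp: mod_Suc)
    ultimately show ?thesis using \<open>k mod 3 = j mod 3\<close> by auto
  qed
  have sne: "snd F \<noteq> snd G" using ne kj' unfolding k_def j_def by (auto simp: prod_eq_iff)
  have "\<exists>b\<in>Basis. snd F b \<noteq> snd G b"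
  proof (rule ccontr)
    assume nb: "\<not> ?thesis"
    have "snd F b' = snd G b'" for b'
    proof (cases "b' \<in> Basis")
      case True then show ?thesis using nb by blast
    next
      case False
      have "snd F b' = idx j x b'" "snd G b' = idx j y b'" using ix iy kj' by simp_all
      then show ?thesis using False unfolding idx_def by simp
    qed
    then show False using sne by (simp add: fun_eq_iff)
  qed
  then obtain b where b: "b \<in> Basis" and bne: "snd F b \<noteq> snd G b" by blast
  have "snd F b mod mm = snd G b mod mm"
    using fun_cong[OF arg_cong[OF cl, of snd], of b] b unfolding col_def by simp
  then have "mm dvd (snd F b - snd G b)" by (simp add: mod_eq_dvd_iff)
  moreover have "snd F b - snd G b \<noteq> 0" using bne by simp
  ultimately have "\<bar>mm\<bar> \<le> \<bar>snd F b - snd G b\<bar>" by (intro dvd_imp_le_int)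
  then have "mm \<le> \<bar>idx j x b - idx j y b\<bar>" using ix iy kj' mm_pos by simp
  from far_idx[OF b this] have "(real_of_int mm - 1) * t j < norm (x - y)" .
  moreover have "real_of_int mm - 1 = 6 * dd" unfolding mm_def dd_def by simp
  ultimately show False using nxy by simp
qed

lemma balls_disjoint:
  assumes F: "F \<in> cells" and G: "G \<in> cells" and cl: "col F = col G" and ne: "F \<noteq> G"
  shows "ball (ctr F) (rad (fst F)) \<inter> ball (ctr G) (rad (fst G)) = {}"
proof (cases "fst G \<le> fst F")
  case True then show ?thesis using balls_disjoint_aux[OF F G cl ne] by simp
next
  case False then show ?thesis using balls_disjoint_aux[OF G F cl[symmetric] ne[symmetric]] by auto
qed

definition fb :: "nat \<times> ('a \<Rightarrow> int) \<Rightarrow> 'a \<times> real" where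
  "fb F = (ctr F, rad (fst F))"

lemma fb_inj: "inj_on fb cells"
proof
  fix F G assume F: "F \<in> cells" and G: "G \<in> cells" and e: "fb F = fb G"
  then have "rad (fst F) = rad (fst G)" unfolding fb_def by simp
  then have "t (fst F) = t (fst G)" unfolding rad_def using dd_ge1 by simp
  then have k: "fst F = fst G" by (rule t_inj)
  have "ctr F = ctr G" using e unfolding fb_def by simp
  then have "snd F = snd G" using ctr_props(3)[OF F] ctr_props(3)[OF G] k by simp
  with k show "F = G" by (simp add: prod_eq_iff)
qed

lemma covers: "A \<subseteq> (\<Union>(x, r) \<in> fb ` cells. ball x (r / 3))"
proof
  fix y assume yA: "y \<in> A"
  define F where "F = (lev y, idx (lev y) y)"
  have F: "F \<in> cells" unfolding F_def cells_def using yA by auto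
  have "idx (lev y) (ctr F) = idx (lev y) y" using ctr_props(3)[OF F] unfolding F_def by simp
  then have "norm (ctr F - y) < dd * t (lev y)" by (rule same_idx_close)
  then have "y \<in> ball (ctr F) (rad (fst F) / 3)" unfolding F_def rad_def by (simp add: dist_norm)
  then show "y \<in> (\<Union>(x, r) \<in> fb ` cells. ball x (r / 3))" using F unfolding fb_def by force
qed

end


context grid
begin

definition ch :: "nat \<times> ('a \<Rightarrow> int) \<Rightarrow> nat" where
  "ch F = (SOME i. tm i (ctr F) > sc (ctr F) / 2)"

definition Ival :: "nat \<Rightarrow> nat \<Rightarrow> 'a \<Rightarrow> int set" where
  "Ival i k b = {\<lfloor>(c i \<bullet> b - R i) / t k\<rfloor> .. \<lfloor>(c i \<bullet> b + R i) / t k\<rfloor>}"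
definition Jval :: "nat \<Rightarrow> nat \<Rightarrow> 'a \<Rightarrow> int set" where
  "Jval i k b = {\<lfloor>(c i \<bullet> b - R i) / t k\<rfloor> .. \<lfloor>(c i \<bullet> b - R i) / t k\<rfloor> + 2 * Mi} \<union>
                {\<lfloor>(c i \<bullet> b + R i) / t k\<rfloor> - 2 * Mi .. \<lfloor>(c i \<bullet> b + R i) / t k\<rfloor>}"
definition Z :: "nat \<Rightarrow> nat \<Rightarrow> ('a \<Rightarrow> int) set" where
  "Z i k = (if t k < 2 * R i \<and> R i < 2 * t k then PiE Basis (Ival i k)
            else if 2 * t k \<le> R i then (\<Union>b\<in>Basis. PiE Basis (\<lambda>b'. if b' = b then Jval i k b else Ival i k b'))
            else {})"

lemma ch_props: assumes F: "F \<in> cells" shows "snd F \<in> Z (ch F) (fst F)"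
proof -
  define x where "x = ctr F"
  define k where "k = fst F"
  define i where "i = ch F"
  have xA: "x \<in> A" and lx: "lev x = k" and ix: "idx k x = snd F"
    using ctr_props[OF F] unfolding x_def k_def by auto
  have scp: "sc x > 0" using sc_pos[OF xA] .
  have tmi: "tm i x > sc x / 2" unfolding i_def ch_def x_def
    using sc_pick[OF scp[unfolded x_def]] by (rule someI_ex)
  have tl: "t k \<le> sc x" "sc x < 2 * t k" using lev_props[OF scp] lx by auto
  have tmle: "tm i x \<le> sc x" by (rule tm_le_sc)
  have tk: "t k > 0" by (rule t_pos)
  have "tm i x > t k / 2" using tmi tl by linarith
  then have "t k / 2 < min (R i) (depth i x / MM)" using tk unfolding tm_def less_max_iff_disj by linarith
  moreover have "min (R i) (depth i x / MM) \<le> R i" "min (R i) (depth i x / MM) \<le> depth i x / MM"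
    by (rule min.cobounded1, rule min.cobounded2)
  ultimately have Rgt: "R i > t k / 2" and dgt: "depth i x / MM > t k / 2" by linarith+
  have "depth i x / MM > 0" using dgt tk by linarith
  then have dpos: "depth i x > 0" using MM_pos by (simp add: zero_less_divide_iff)
  have inside: "\<bar>(x - c i) \<bullet> b\<bar> < R i" if "b \<in> Basis" for b
    using dpos that unfolding depth_def by (subst (asm) Min_gr_iff) auto
  have inI: "idx k x b \<in> Ival i k b" if b: "b \<in> Basis" for b
  proof -
    have "c i \<bullet> b - R i < x \<bullet> b" "x \<bullet> b < c i \<bullet> b + R i"
      using inside[OF b] by (auto simp: inner_diff_left)
    then have "(c i \<bullet> b - R i) / t k \<le> x \<bullet> b / t k" "x \<bullet> b / t k \<le> (c i \<bullet> b + R i) / t k"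
      using tk by (auto intro: divide_right_mono)
    then show ?thesis unfolding Ival_def idx_def using b by (auto intro: floor_mono)
  qed
  have ext: "idx k x \<in> extensional Basis" unfolding idx_def by simp
  show ?thesis
  proof (cases "R i < 2 * t k")
    case True
    have "t k < 2 * R i" using Rgt by simp
    moreover have "idx k x \<in> PiE Basis (Ival i k)" using inI ext by (auto simp: PiE_iff)
    ultimately show ?thesis using True ix unfolding Z_def i_def k_def by simp
  next
    case False
    then have Rge: "2 * t k \<le> R i" by simp
    have "min (R i) (depth i x / MM) < 2 * t k"
    proof -
      have "min (R i) (depth i x / MM) \<le> tm i x" unfolding tm_def by (rule max.cobounded2)
      then show ?thesis using tmle tl by linarith
    qed
    then have "depth i x / MM < 2 * t k" using Rge by (auto simp: min_def split: if_splits)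
    then have "depth i x < 2 * MM * t k" using MM_pos by (simp add: divide_less_eq mult.commute mult.left_commute)
    then obtain b where b: "b \<in> Basis" and bsm: "R i - \<bar>(x - c i) \<bullet> b\<bar> < 2 * MM * t k"
      unfolding depth_def by (subst (asm) Min_less_iff) auto
    have MMi: "2 * MM * t k / t k = real_of_int (2 * Mi)" using tk unfolding MM_def by simp
    have inJ: "idx k x b \<in> Jval i k b"
    proof (cases "(x - c i) \<bullet> b \<ge> 0")
      case True
      then have "x \<bullet> b > c i \<bullet> b + R i - 2 * MM * t k" using bsm by (simp add: inner_diff_left)
      then have "(c i \<bullet> b + R i - 2 * MM * t k) / t k < x \<bullet> b / t k"
        using tk by (rule divide_strict_right_mono)
      moreover have "(c i \<bullet> b + R i - 2 * MM * t k) / t k = (c i \<bullet> b + R i) / t k - real_of_int (2 * Mi)"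
        using tk unfolding MM_def by (simp add: diff_divide_distrib)
      ultimately have "x \<bullet> b / t k \<ge> (c i \<bullet> b + R i) / t k - real_of_int (2 * Mi)" by linarith
      then have "\<lfloor>(c i \<bullet> b + R i) / t k - real_of_int (2 * Mi)\<rfloor> \<le> \<lfloor>x \<bullet> b / t k\<rfloor>"
        by (rule floor_mono)
      then have "\<lfloor>x \<bullet> b / t k\<rfloor> \<ge> \<lfloor>(c i \<bullet> b + R i) / t k\<rfloor> - 2 * Mi"
        by (simp only: floor_diff_of_int)
      moreover have "\<lfloor>x \<bullet> b / t k\<rfloor> \<le> \<lfloor>(c i \<bullet> b + R i) / t k\<rfloor>"
        using inI[OF b] unfolding Ival_def idx_def using b by simp
      ultimately show ?thesis unfolding Jval_def idx_def using b by simp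
    next
      case False
      then have "x \<bullet> b < c i \<bullet> b - R i + 2 * MM * t k" using bsm by (simp add: inner_diff_left)
      then have "x \<bullet> b / t k < (c i \<bullet> b - R i + 2 * MM * t k) / t k"
        using tk by (rule divide_strict_right_mono)
      moreover have "(c i \<bullet> b - R i + 2 * MM * t k) / t k = (c i \<bullet> b - R i) / t k + real_of_int (2 * Mi)"
        using tk unfolding MM_def by (simp add: add_divide_distrib)
      ultimately have "x \<bullet> b / t k \<le> (c i \<bullet> b - R i) / t k + real_of_int (2 * Mi)" by linarith
      then have "\<lfloor>x \<bullet> b / t k\<rfloor> \<le> \<lfloor>(c i \<bullet> b - R i) / t k + real_of_int (2 * Mi)\<rfloor>"
        by (rule floor_mono)
      then have "\<lfloor>x \<bullet> b / t k\<rfloor> \<le> \<lfloor>(c i \<bullet> b - R i) / t k\<rfloor> + 2 * Mi"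
        by (simp only: floor_add_int)
      moreover have "\<lfloor>x \<bullet> b / t k\<rfloor> \<ge> \<lfloor>(c i \<bullet> b - R i) / t k\<rfloor>"
        using inI[OF b] unfolding Ival_def idx_def using b by simp
      ultimately show ?thesis unfolding Jval_def idx_def using b by simp
    qed
    have "idx k x \<in> PiE Basis (\<lambda>b'. if b' = b then Jval i k b else Ival i k b')"
      using inI inJ ext by (auto simp: PiE_iff)
    then have "idx k x \<in> (\<Union>b\<in>Basis. PiE Basis (\<lambda>b'. if b' = b then Jval i k b else Ival i k b'))"
      using b by blast
    then show ?thesis using False Rge ix unfolding Z_def i_def k_def by simp
  qed
qed

end


context grid
begin

lemma Ival_fin: "finite (Ival i k b)" unfolding Ival_def by simp
lemma Jval_fin: "finite (Jval i k b)" unfolding Jval_def by simp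
lemma Z_fin: "finite (Z i k)" unfolding Z_def using Ival_fin Jval_fin
  by (auto intro!: finite_PiE)

lemma card_I: assumes "0 \<le> R i" shows "real (card (Ival i k b)) \<le> 2 * R i / t k + 2"
proof -
  define lo where "lo = (c i \<bullet> b - R i) / t k"
  define hi where "hi = (c i \<bullet> b + R i) / t k"
  have "hi - lo = 2 * R i / t k" unfolding lo_def hi_def by (simp add: diff_divide_distrib[symmetric])
  moreover have "real_of_int \<lfloor>hi\<rfloor> \<le> hi" "lo < real_of_int \<lfloor>lo\<rfloor> + 1" by linarith+
  moreover have "real_of_int (\<lfloor>hi\<rfloor> - \<lfloor>lo\<rfloor> + 1) = real_of_int \<lfloor>hi\<rfloor> - real_of_int \<lfloor>lo\<rfloor> + 1" by simp
  ultimately have h: "real_of_int (\<lfloor>hi\<rfloor> - \<lfloor>lo\<rfloor> + 1) < 2 * R i / t k + 2" by linarith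
  have "card (Ival i k b) = nat (\<lfloor>hi\<rfloor> - \<lfloor>lo\<rfloor> + 1)" unfolding Ival_def lo_def hi_def by simp
  moreover have "0 \<le> 2 * R i / t k" using assms t_pos[of k] by simp
  ultimately show ?thesis using h by (cases "\<lfloor>hi\<rfloor> - \<lfloor>lo\<rfloor> + 1 \<ge> 0") auto
qed

lemma card_J: "real (card (Jval i k b)) \<le> 4 * MM + 2"
proof -
  have "card (Jval i k b) \<le> nat (2 * Mi + 1) + nat (2 * Mi + 1)"
    unfolding Jval_def using card_Un_le by (rule order.trans) simp
  moreover have "Mi \<ge> 0" unfolding Mi_def by simp
  ultimately show ?thesis unfolding MM_def by linarith
qed

definition K1 :: real where "K1 = dd * (4 * MM + 2)"
definition nn :: nat where "nn = DIM('a) - 1"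

lemma dim_Suc: "DIM('a) = Suc nn" unfolding nn_def using DIM_positive[where 'a='a] by simp
lemma K1_ge: "K1 \<ge> 6" unfolding K1_def using MM_eq dd_ge1
  by (smt (verit, best) mult_le_cancel_right1 mult_right_mono)

lemma card_Z:
  assumes tk: "t k < 2 * R i"
  shows "real (card (Z i k)) \<le> K1 * (6 * R i / t k) ^ nn"
proof -
  define q where "q = 2 * R i / t k + 2"
  have tpos: "t k > 0" by (rule t_pos)
  have R0': "0 \<le> R i" by (rule R0)
  have q0: "0 \<le> q" unfolding q_def using R0' tpos by simp
  have q6: "q \<le> 6 * R i / t k"
  proof -
    have "2 < 4 * R i / t k" using tk tpos by (simp add: less_divide_eq)
    then show ?thesis unfolding q_def by (simp add: add_divide_distrib[symmetric])
  qed
  have qn: "q ^ nn \<le> (6 * R i / t k) ^ nn" by (rule power_mono[OF q6 q0])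
  have cI: "real (card (Ival i k b)) \<le> q" for b unfolding q_def by (rule card_I[OF R0'])
  have main: "real (card (Z i k)) \<le> K1 * q ^ nn"
  proof (cases "R i < 2 * t k")
    case True
    then have Zeq: "Z i k = PiE Basis (Ival i k)" unfolding Z_def using tk by simp
    have "real (card (Z i k)) = (\<Prod>b\<in>Basis. real (card (Ival i k b)))"
      unfolding Zeq by (simp add: card_PiE)
    also have "\<dots> \<le> (\<Prod>b\<in>(Basis::'a set). q)" by (intro prod_mono) (auto simp: cI)
    also have "\<dots> = q ^ DIM('a)" by simp
    also have "\<dots> = q * q ^ nn" unfolding dim_Suc by simp
    also have "\<dots> \<le> K1 * q ^ nn"
    proof -
      have "2 * R i / t k \<le> 4" using True tpos by (simp add: divide_le_eq)
      then have "q \<le> 6" unfolding q_def by simp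
      then show ?thesis using K1_ge q0 by (intro mult_right_mono) auto
    qed
    finally show ?thesis .
  next
    case False
    then have Zeq: "Z i k = (\<Union>b\<in>Basis. PiE Basis (\<lambda>b'. if b' = b then Jval i k b else Ival i k b'))"
      unfolding Z_def by simp
    have each: "real (card (PiE Basis (\<lambda>b'. if b' = b then Jval i k b else Ival i k b'))) \<le> (4 * MM + 2) * q ^ nn"
      if b: "b \<in> Basis" for b
    proof -
      have "real (card (PiE Basis (\<lambda>b'. if b' = b then Jval i k b else Ival i k b')))
          = (\<Prod>b'\<in>Basis. real (card (if b' = b then Jval i k b else Ival i k b')))"
        by (simp add: card_PiE)
      also have "\<dots> = real (card (Jval i k b)) * (\<Prod>b'\<in>Basis - {b}. real (card (if b' = b then Jval i k b else Ival i k b')))"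
        using b by (simp add: prod.remove)
      also have "(\<Prod>b'\<in>Basis - {b}. real (card (if b' = b then Jval i k b else Ival i k b'))) = (\<Prod>b'\<in>Basis - {b}. real (card (Ival i k b')))"
        by (intro prod.cong) auto
      also have "\<dots> \<le> (\<Prod>b'\<in>Basis - {b}. q)" by (intro prod_mono) (auto simp: cI)
      also have "\<dots> = q ^ nn" using b by (simp add: card_Diff_singleton nn_def)
      finally have "real (card (PiE Basis (\<lambda>b'. if b' = b then Jval i k b else Ival i k b'))) \<le> real (card (Jval i k b)) * q ^ nn"
        by (simp add: mult_left_mono)
      also have "\<dots> \<le> (4 * MM + 2) * q ^ nn" using card_J q0 by (intro mult_right_mono) auto
      finally show ?thesis .
    qed
    have "card (Z i k) \<le> (\<Sum>b\<in>Basis. card (PiE Basis (\<lambda>b'. if b' = b then Jval i k b else Ival i k b')))"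
      unfolding Zeq by (rule card_UN_le) simp
    then have "real (card (Z i k)) \<le> real (\<Sum>b\<in>Basis. card (PiE Basis (\<lambda>b'. if b' = b then Jval i k b else Ival i k b')))"
      by (simp only: of_nat_le_iff)
    also have "\<dots> = (\<Sum>b\<in>Basis. real (card (PiE Basis (\<lambda>b'. if b' = b then Jval i k b else Ival i k b'))))"
      by (simp only: of_nat_sum)
    also have "\<dots> \<le> (\<Sum>b\<in>(Basis::'a set). (4 * MM + 2) * q ^ nn)" by (intro sum_mono each)
    also have "\<dots> = K1 * q ^ nn" unfolding K1_def dd_def by simp
    finally show ?thesis .
  qed
  also have "\<dots> \<le> K1 * (6 * R i / t k) ^ nn" using qn K1_ge by (intro mult_left_mono) auto
  finally show ?thesis .
qed

lemma Z_empty: assumes "\<not> t k < 2 * R i" shows "Z i k = {}"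
  using assms t_pos[of k] unfolding Z_def by auto

end


definition K2c :: "nat \<Rightarrow> real \<Rightarrow> real" where
  "K2c d \<alpha> = real d * (4 * (12 * real d) + 2) * (3 * real d) powr \<alpha> * 6 ^ (d - 1) *
     2 powr (\<alpha> - (real d - 1)) / (1 - 2 powr (- (\<alpha> - (real d - 1))))"

lemma K2c_pos: assumes "d \<ge> 1" "real d - 1 < \<alpha>" shows "K2c d \<alpha> > 0"
proof -
  have "2 powr (- (\<alpha> - (real d - 1))) < 2 powr 0" using assms by (intro powr_less_mono) auto
  then have "1 - 2 powr (- (\<alpha> - (real d - 1))) > 0" by simp
  then show ?thesis unfolding K2c_def using assms by (intro divide_pos_pos mult_pos_pos) auto
qed

context grid
begin

definition \<beta> :: real where "\<beta> = \<alpha> - (dd - 1)"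
definition qq :: real where "qq = 2 powr (- \<beta>)"

lemma beta_pos: "\<beta> > 0" unfolding \<beta>_def dd_def using alpha by simp
lemma qq_lt1: "qq < 1"
proof -
  have "2 powr (- \<beta>) < 2 powr 0" using beta_pos by (intro powr_less_mono) auto
  then show ?thesis unfolding qq_def by simp
qed
lemma qq_pos: "qq > 0" unfolding qq_def by simp
lemma real_nn: "real nn = dd - 1" unfolding nn_def dd_def using DIM_positive[where 'a='a] by simp

lemma K2_eq: "K2c DIM('a) \<alpha> = K1 * (3 * dd) powr \<alpha> * 6 ^ nn * 2 powr \<beta> / (1 - qq)"
  unfolding K2c_def K1_def MM_eq dd_def nn_def \<beta>_def qq_def by simp

lemma t_Suc_powr: "t (Suc k) powr \<beta> = qq * t k powr \<beta>"
proof -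
  have "t (Suc k) powr \<beta> = t k powr \<beta> / 2 powr \<beta>" unfolding t_Suc by (simp add: powr_divide)
  then show ?thesis unfolding qq_def by (simp add: powr_minus_divide)
qed

lemma geo:
  assumes Rp: "R i > 0" and L: "finite L"
  shows "(\<Sum>k\<in>L. (if t k < 2 * R i then t k powr \<beta> else 0)) \<le> (2 * R i) powr \<beta> / (1 - qq)"
proof -
  define g where "g k = (if t k < 2 * R i then t k powr \<beta> else 0)" for k
  define h where "h k = min ((2 * R i) powr \<beta>) (t k powr \<beta>)" for k
  have g0: "g k \<ge> 0" for k unfolding g_def by simp
  have step: "g k * (1 - qq) \<le> h k - h (Suc k)" for k
  proof (cases "t k < 2 * R i")
    case True
    have "t (Suc k) < 2 * R i" using True t_Suc[of k] t_pos[of k] by simp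
    have h1: "h k = t k powr \<beta>" unfolding h_def
      using powr_less_mono2[OF beta_pos _ True] t_pos[of k] by simp
    have h2: "h (Suc k) = t (Suc k) powr \<beta>" unfolding h_def
      using powr_less_mono2[OF beta_pos _ \<open>t (Suc k) < 2 * R i\<close>] t_pos[of "Suc k"] by simp
    show ?thesis unfolding g_def using True h1 h2 t_Suc_powr[of k] by (simp add: algebra_simps)
  next
    case False
    have "t (Suc k) powr \<beta> \<le> t k powr \<beta>"
      using t_anti[of k "Suc k"] t_pos[of "Suc k"] beta_pos by (intro powr_mono2) auto
    then have "h (Suc k) \<le> h k" unfolding h_def by (simp add: min.coboundedI2)
    then show ?thesis unfolding g_def using False by simp
  qed
  obtain N where LN: "L \<subseteq> {..<N}" using L by (meson finite_nat_iff_bounded)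
  have "(\<Sum>k\<in>L. g k) \<le> (\<Sum>k<N. g k)" using LN g0 by (intro sum_mono2) auto
  moreover have "(\<Sum>k<N. g k) * (1 - qq) \<le> (2 * R i) powr \<beta>"
  proof -
    have "(\<Sum>k<N. g k) * (1 - qq) = (\<Sum>k<N. g k * (1 - qq))" by (simp add: sum_distrib_right)
    also have "\<dots> \<le> (\<Sum>k<N. h k - h (Suc k))" by (intro sum_mono step)
    also have "\<dots> = h 0 - h N" by (rule sum_lessThan_telescope')
    also have "\<dots> \<le> (2 * R i) powr \<beta>"
    proof -
      have "h 0 \<le> (2 * R i) powr \<beta>" "h N \<ge> 0" unfolding h_def by auto
      then show ?thesis by linarith
    qed
    finally show ?thesis .
  qed
  ultimately have "(\<Sum>k\<in>L. g k) * (1 - qq) \<le> (2 * R i) powr \<beta>"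
    using qq_lt1 by (smt (verit) mult_right_mono)
  then show ?thesis unfolding g_def[symmetric] using qq_lt1 by (simp add: pos_le_divide_eq)
qed

lemma per_i:
  assumes L: "finite L"
  shows "(\<Sum>k\<in>L. real (card (Z i k)) * rad k powr \<alpha>) \<le> K2c DIM('a) \<alpha> * R i powr \<alpha>"
proof (cases "R i = 0")
  case True
  then have "Z i k = {}" for k using Z_empty[of k i] t_pos[of k] by simp
  then show ?thesis using True by simp
next
  case False
  then have Rp: "R i > 0" using R0[of i] by simp
  define Gc where "Gc = K1 * (3 * dd) powr \<alpha> * 6 ^ nn * R i ^ nn"
  have Gc0: "Gc \<ge> 0" unfolding Gc_def using K1_ge Rp by simp
  have trm: "real (card (Z i k)) * rad k powr \<alpha> \<le> Gc * (if t k < 2 * R i then t k powr \<beta> else 0)" for k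
  proof (cases "t k < 2 * R i")
    case True
    have tp: "t k > 0" by (rule t_pos)
    have c1: "real (card (Z i k)) * rad k powr \<alpha> \<le> K1 * (6 * R i / t k) ^ nn * rad k powr \<alpha>"
      using card_Z[OF True] by (intro mult_right_mono) auto
    have eq1: "rad k powr \<alpha> = (3 * dd) powr \<alpha> * (t k ^ nn * t k powr \<beta>)"
    proof -
      have "t k powr \<alpha> = t k powr (real nn + \<beta>)" unfolding \<beta>_def real_nn by simp
      also have "\<dots> = t k powr real nn * t k powr \<beta>" by (simp add: powr_add)
      also have "\<dots> = t k ^ nn * t k powr \<beta>" using tp by (simp add: powr_realpow)
      finally show ?thesis unfolding rad_def by (simp add: powr_mult)
    qed
    have e3: "K1 * (6 * R i / t k) ^ nn * ((3 * dd) powr \<alpha> * (t k ^ nn * t k powr \<beta>)) = Gc * t k powr \<beta>"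
      unfolding Gc_def using tp by (simp add: power_divide power_mult_distrib field_simps)
    have "real (card (Z i k)) * rad k powr \<alpha> \<le> Gc * t k powr \<beta>"
      using c1 unfolding eq1 e3 .
    then show ?thesis using True by simp
  next
    case False
    then show ?thesis using Z_empty[OF False] by simp
  qed
  have "(\<Sum>k\<in>L. real (card (Z i k)) * rad k powr \<alpha>) \<le> (\<Sum>k\<in>L. Gc * (if t k < 2 * R i then t k powr \<beta> else 0))"
    by (intro sum_mono trm)
  also have "\<dots> = Gc * (\<Sum>k\<in>L. (if t k < 2 * R i then t k powr \<beta> else 0))" by (simp add: sum_distrib_left)
  also have "\<dots> \<le> Gc * ((2 * R i) powr \<beta> / (1 - qq))" using geo[OF Rp L] Gc0 by (intro mult_left_mono)
  also have "\<dots> = K2c DIM('a) \<alpha> * R i powr \<alpha>"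
  proof -
    have "R i ^ nn * R i powr \<beta> = R i powr \<alpha>"
    proof -
      have "R i ^ nn * R i powr \<beta> = R i powr real nn * R i powr \<beta>" using Rp by (simp add: powr_realpow)
      also have "\<dots> = R i powr (real nn + \<beta>)" by (simp add: powr_add)
      also have "real nn + \<beta> = \<alpha>" unfolding \<beta>_def real_nn by simp
      finally show ?thesis .
    qed
    moreover have "(2 * R i) powr \<beta> = 2 powr \<beta> * R i powr \<beta>" by (simp add: powr_mult)
    ultimately show ?thesis unfolding K2_eq Gc_def by (simp add: field_simps)
  qed
  finally show ?thesis .
qed

end


context grid
begin

lemma cost_fin:
  assumes G: "finite G" "G \<subseteq> cells"
  shows "(\<Sum>F\<in>G. rad (fst F) powr \<alpha>) \<le> K2c DIM('a) \<alpha> * S"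
proof -
  have K2p: "K2c DIM('a) \<alpha> > 0" using alpha by (intro K2c_pos) auto
  have "(\<Sum>F\<in>G. rad (fst F) powr \<alpha>) = (\<Sum>i\<in>ch ` G. \<Sum>F\<in>{F\<in>G. ch F = i}. rad (fst F) powr \<alpha>)"
    by (rule sum.image_gen[OF G(1)])
  also have "\<dots> \<le> (\<Sum>i\<in>ch ` G. K2c DIM('a) \<alpha> * R i powr \<alpha>)"
  proof (intro sum_mono)
    fix i assume "i \<in> ch ` G"
    have sub: "{F\<in>G. ch F = i} \<subseteq> Sigma (fst ` G) (Z i)"
    proof
      fix F assume "F \<in> {F\<in>G. ch F = i}"
      then have FG: "F \<in> G" and chF: "ch F = i" by auto
      then have "snd F \<in> Z i (fst F)" using ch_props[of F] G(2) by auto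
      moreover have "fst F \<in> fst ` G" using FG by blast
      ultimately show "F \<in> Sigma (fst ` G) (Z i)" by (cases F) simp
    qed
    have finS: "finite (Sigma (fst ` G) (Z i))" using G(1) Z_fin by auto
    have "(\<Sum>F\<in>{F\<in>G. ch F = i}. rad (fst F) powr \<alpha>) \<le> (\<Sum>F\<in>Sigma (fst ` G) (Z i). rad (fst F) powr \<alpha>)"
      by (intro sum_mono2[OF finS sub]) simp
    also have "(\<Sum>F\<in>Sigma (fst ` G) (Z i). rad (fst F) powr \<alpha>) = (\<Sum>(k, z)\<in>Sigma (fst ` G) (Z i). rad k powr \<alpha>)"
      by (simp add: case_prod_unfold)
    also have "\<dots> = (\<Sum>k\<in>fst ` G. \<Sum>z\<in>Z i k. rad k powr \<alpha>)"
      by (rule sum.Sigma[symmetric]) (use G(1) Z_fin in auto)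
    also have "\<dots> = (\<Sum>k\<in>fst ` G. real (card (Z i k)) * rad k powr \<alpha>)" by simp
    also have "\<dots> \<le> K2c DIM('a) \<alpha> * R i powr \<alpha>" by (rule per_i) (use G(1) in auto)
    finally show "(\<Sum>F\<in>{F\<in>G. ch F = i}. rad (fst F) powr \<alpha>) \<le> K2c DIM('a) \<alpha> * R i powr \<alpha>" .
  qed
  also have "\<dots> = K2c DIM('a) \<alpha> * (\<Sum>i\<in>ch ` G. R i powr \<alpha>)" by (simp add: sum_distrib_left)
  also have "\<dots> \<le> K2c DIM('a) \<alpha> * S" using sumR[of "ch ` G"] G(1) K2p by (intro mult_left_mono) auto
  finally show ?thesis .
qed

lemma grid_result:
  "\<exists>\<B>::('a \<times> real) set.
     supercovering \<B> A \<and>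
     (\<forall>(x, r) \<in> \<B>. x \<in> A \<and> 0 < r \<and> r \<le> \<epsilon>) \<and>
     (\<exists>\<B>s :: nat \<Rightarrow> ('a \<times> real) set.
        \<B> = (\<Union>j<3 * (6 * DIM('a) + 1) ^ DIM('a). \<B>s j) \<and>
        (\<forall>i<3 * (6 * DIM('a) + 1) ^ DIM('a). \<forall>j<3 * (6 * DIM('a) + 1) ^ DIM('a). i \<noteq> j \<longrightarrow> \<B>s i \<inter> \<B>s j = {}) \<and>
        (\<forall>j<3 * (6 * DIM('a) + 1) ^ DIM('a). disjoint_balls (\<B>s j) \<and>
           (\<Sum>\<^sub>\<infinity>(x, r) \<in> \<B>s j. ennreal (r powr \<alpha>)) \<le> ennreal (K2c DIM('a) \<alpha> * S)))"
proof -
  obtain h where h: "bij_betw h {0..<card ColSet} ColSet"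
    using ex_bij_betw_nat_finite[OF ColSet_fin] by blast
  define enc where "enc = the_inv_into {0..<card ColSet} h"
  have enc: "bij_betw enc ColSet {0..<card ColSet}" unfolding enc_def using h by (rule bij_betw_the_inv_into)
  have encinj: "inj_on enc ColSet" using enc by (rule bij_betw_imp_inj_on)
  have encr: "enc (col F) < card ColSet" for F using bij_betw_apply[OF enc col_in[of F]] by simp
  define Bs where "Bs j = fb ` {F \<in> cells. enc (col F) = j}" for j
  have C1: "card ColSet = 3 * (6 * DIM('a) + 1) ^ DIM('a)" by (rule ColSet_card)
  show ?thesis
  proof (intro exI[of _ "fb ` cells"] conjI)
    show "supercovering (fb ` cells) A" unfolding supercovering_def by (rule covers)
    show "\<forall>(x, r) \<in> fb ` cells. x \<in> A \<and> 0 < r \<and> r \<le> \<epsilon>"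
      using ctr_props(1) rad_pos rad_le unfolding fb_def by auto
    show "\<exists>\<B>s :: nat \<Rightarrow> ('a \<times> real) set.
        fb ` cells = (\<Union>j<3 * (6 * DIM('a) + 1) ^ DIM('a). \<B>s j) \<and>
        (\<forall>i<3 * (6 * DIM('a) + 1) ^ DIM('a). \<forall>j<3 * (6 * DIM('a) + 1) ^ DIM('a). i \<noteq> j \<longrightarrow> \<B>s i \<inter> \<B>s j = {}) \<and>
        (\<forall>j<3 * (6 * DIM('a) + 1) ^ DIM('a). disjoint_balls (\<B>s j) \<and>
           (\<Sum>\<^sub>\<infinity>(x, r) \<in> \<B>s j. ennreal (r powr \<alpha>)) \<le> ennreal (K2c DIM('a) \<alpha> * S))"
      unfolding C1[symmetric]
    proof (intro exI[of _ Bs] conjI allI impI)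
      show "fb ` cells = (\<Union>j<card ColSet. Bs j)"
        unfolding Bs_def using encr by blast
    next
      fix i j assume "i < card ColSet" "j < card ColSet" "i \<noteq> j"
      show "Bs i \<inter> Bs j = {}"
      proof (rule ccontr)
        assume "Bs i \<inter> Bs j \<noteq> {}"
        then obtain p where "p \<in> Bs i" "p \<in> Bs j" by blast
        then obtain F G where F: "F \<in> cells" "enc (col F) = i" "p = fb F" and G: "G \<in> cells" "enc (col G) = j" "p = fb G"
          unfolding Bs_def by blast
        have e: "fb F = fb G" using F G by simp
        have "F = G" using inj_onD[OF fb_inj e F(1) G(1)] .
        then show False using F G \<open>i \<noteq> j\<close> by simp
      qed
    next
      fix j assume "j < card ColSet"
      show "disjoint_balls (Bs j)"
        unfolding disjoint_balls_def
      proof (intro ballI impI)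
        fix p q assume p: "p \<in> Bs j" and q: "q \<in> Bs j" and pq: "p \<noteq> q"
        obtain F where F: "F \<in> cells" "enc (col F) = j" "p = fb F" using p unfolding Bs_def by auto
        obtain G where G: "G \<in> cells" "enc (col G) = j" "q = fb G" using q unfolding Bs_def by auto
        have "F \<noteq> G" using pq F G by auto
        have "col F = col G" using inj_onD[OF encinj _ col_in col_in] F G by simp
        from balls_disjoint[OF F(1) G(1) this \<open>F \<noteq> G\<close>]
        show "ball (fst p) (snd p) \<inter> ball (fst q) (snd q) = {}" using F G unfolding fb_def by simp
      qed
      define CF where "CF = {F \<in> cells. enc (col F) = j}"
      have injCF: "inj_on fb CF" using fb_inj unfolding CF_def by (rule inj_on_subset) auto
      have "(\<Sum>\<^sub>\<infinity>(x, r) \<in> Bs j. ennreal (r powr \<alpha>)) = (\<Sum>\<^sub>\<infinity>F \<in> CF. ennreal (rad (fst F) powr \<alpha>))"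
        unfolding Bs_def CF_def[symmetric] infsum_reindex[OF injCF] by (simp add: fb_def o_def)
      also have "\<dots> \<le> ennreal (K2c DIM('a) \<alpha> * S)"
      proof (rule infsum_le_finite_sums)
        show "(\<lambda>F. ennreal (rad (fst F) powr \<alpha>)) summable_on CF" by (rule nonneg_summable_on_complete) simp
        fix G assume "finite G" "G \<subseteq> CF"
        then have "(\<Sum>F\<in>G. ennreal (rad (fst F) powr \<alpha>)) = ennreal (\<Sum>F\<in>G. rad (fst F) powr \<alpha>)"
          by (intro sum_ennreal) auto
        also have "\<dots> \<le> ennreal (K2c DIM('a) \<alpha> * S)"
          using cost_fin[of G] \<open>finite G\<close> \<open>G \<subseteq> CF\<close> unfolding CF_def by (intro ennreal_leI) auto
        finally show "(\<Sum>F\<in>G. ennreal (rad (fst F) powr \<alpha>)) \<le> ennreal (K2c DIM('a) \<alpha> * S)" .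
      qed
      finally show "(\<Sum>\<^sub>\<infinity>(x, r) \<in> Bs j. ennreal (r powr \<alpha>)) \<le> ennreal (K2c DIM('a) \<alpha> * S)" .
    qed
  qed
qed

end

theorem lemma6:
  "\<exists>C1::nat. C1 > 0 \<and>
     (\<forall>\<alpha>::real. real DIM('a::euclidean_space) - 1 < \<alpha> \<and> \<alpha> \<le> real DIM('a) \<longrightarrow>
       (\<exists>C2::real. C2 > 0 \<and>
         (\<forall>(A::'a set) (a::real) (\<epsilon>::real).
            bounded A \<and> a > 0 \<and> hausdorff_measure \<alpha> A < ennreal a \<and> \<epsilon> > 0 \<longrightarrow>
            (\<exists>\<B>::('a \<times> real) set.
               supercovering \<B> A \<and>
               (\<forall>(x, r) \<in> \<B>. x \<in> A \<and> 0 < r \<and> r \<le> \<epsilon>) \<and>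
               (\<exists>\<B>s :: nat \<Rightarrow> ('a \<times> real) set.
                  \<B> = (\<Union>j<C1. \<B>s j) \<and>
                  (\<forall>i<C1. \<forall>j<C1. i \<noteq> j \<longrightarrow> \<B>s i \<inter> \<B>s j = {}) \<and>
                  (\<forall>j<C1. disjoint_balls (\<B>s j) \<and>
                     (\<Sum>\<^sub>\<infinity>(x, r) \<in> \<B>s j. ennreal (r powr \<alpha>)) \<le> ennreal (C2 * a)))))))"
proof (intro exI[of _ "3 * (6 * DIM('a) + 1) ^ DIM('a)"] conjI allI impI)
  show "0 < 3 * (6 * DIM('a) + 1) ^ DIM('a)" by simp
  fix \<alpha> :: real assume al: "real DIM('a) - 1 < \<alpha> \<and> \<alpha> \<le> real DIM('a)"
  have apos: "\<alpha> > 0" using al DIM_positive[where 'a='a] by linarith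
  define K where "K = 2 powr \<alpha> * (2 powr \<alpha> / hausdorff_const \<alpha> + 1)"
  have Kp: "K > 0"
  proof -
    have "2 powr \<alpha> / hausdorff_const \<alpha> > 0" using hausdorff_const_pos[OF apos] by simp
    then show ?thesis unfolding K_def by (intro mult_pos_pos) auto
  qed
  have K2p: "K2c DIM('a) \<alpha> > 0" using al by (intro K2c_pos) auto
  show "\<exists>C2>0. \<forall>(A::'a set) a \<epsilon>. bounded A \<and> a > 0 \<and> hausdorff_measure \<alpha> A < ennreal a \<and> \<epsilon> > 0 \<longrightarrow>
            (\<exists>\<B>::('a \<times> real) set.
               supercovering \<B> A \<and>
               (\<forall>(x, r) \<in> \<B>. x \<in> A \<and> 0 < r \<and> r \<le> \<epsilon>) \<and>
               (\<exists>\<B>s :: nat \<Rightarrow> ('a \<times> real) set.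
                  \<B> = (\<Union>j<3 * (6 * DIM('a) + 1) ^ DIM('a). \<B>s j) \<and>
                  (\<forall>i<3 * (6 * DIM('a) + 1) ^ DIM('a). \<forall>j<3 * (6 * DIM('a) + 1) ^ DIM('a). i \<noteq> j \<longrightarrow> \<B>s i \<inter> \<B>s j = {}) \<and>
                  (\<forall>j<3 * (6 * DIM('a) + 1) ^ DIM('a). disjoint_balls (\<B>s j) \<and>
                     (\<Sum>\<^sub>\<infinity>(x, r) \<in> \<B>s j. ennreal (r powr \<alpha>)) \<le> ennreal (C2 * a))))"
  proof (intro exI[of _ "K2c DIM('a) \<alpha> * K"] conjI allI impI)
    show "0 < K2c DIM('a) \<alpha> * K" using K2p Kp by simp
    fix A :: "'a set" and a \<epsilon> :: real
    assume H: "bounded A \<and> a > 0 \<and> hausdorff_measure \<alpha> A < ennreal a \<and> \<epsilon> > 0"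
    have tau: "\<epsilon> / (3 * real DIM('a)) > 0" using H by simp
    obtain c :: "nat \<Rightarrow> 'a" and R where R: "\<forall>i. 0 \<le> R i \<and> R i \<le> \<epsilon> / (3 * real DIM('a))"
      and cov: "A \<subseteq> (\<Union>i. cube (c i) (R i))"
      and sR: "\<forall>I. finite I \<longrightarrow> (\<Sum>i\<in>I. R i powr \<alpha>) \<le> K * a"
      using cover_cubes[OF apos _ tau, of a A] H unfolding K_def by blast
    interpret grid A c R \<alpha> \<epsilon> "K * a"
      by unfold_locales (use al H R cov sR in auto)
    have "ennreal (K2c DIM('a) \<alpha> * (K * a)) = ennreal (K2c DIM('a) \<alpha> * K * a)" by (simp add: mult.assoc)
    then show "\<exists>\<B>::('a \<times> real) set.
               supercovering \<B> A \<and>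
               (\<forall>(x, r) \<in> \<B>. x \<in> A \<and> 0 < r \<and> r \<le> \<epsilon>) \<and>
               (\<exists>\<B>s :: nat \<Rightarrow> ('a \<times> real) set.
                  \<B> = (\<Union>j<3 * (6 * DIM('a) + 1) ^ DIM('a). \<B>s j) \<and>
                  (\<forall>i<3 * (6 * DIM('a) + 1) ^ DIM('a). \<forall>j<3 * (6 * DIM('a) + 1) ^ DIM('a). i \<noteq> j \<longrightarrow> \<B>s i \<inter> \<B>s j = {}) \<and>
                  (\<forall>j<3 * (6 * DIM('a) + 1) ^ DIM('a). disjoint_balls (\<B>s j) \<and>
                     (\<Sum>\<^sub>\<infinity>(x, r) \<in> \<B>s j. ennreal (r powr \<alpha>)) \<le> ennreal (K2c DIM('a) \<alpha> * K * a)))"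
      using grid_result by simp
  qed
qed


end
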